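(* A function $h\in\mathbf{F}(\mathbb{S}^1)$ is an extreme point of $\mathbf{F}(\mathbb{S}^1)$ if and only if $|h'|=1$ almost everywhere on $[0,\pi]$.
   Context: $\mathbf{F}(\mathbb{S}^1)=\{f:[0,\pi]\to\mathbb{R}\ 1\text{-Lipschitz}:0\le f\le\pi,\ f(0)+f(\pi)=\pi\}$, a convex subset of $C([0,\pi])$. A point of a convex set $S$ is an extreme point if it is not the midpoint of any pair of distinct points of $S$. Elements of $\mathbf{F}(\mathbb{S}^1)$ are differentiable almost everywhere (Rademacher). *)

theory Defs
  imports "HOL-Analysis.Analysis"
begin

text \<open>Elements of C([0,pi]) are represented by the canonical representative
  that vanishes outside [0,pi], so that equality of functions is equality in C([0,pi]).\<close>
definition F_S1 :: "(real \<Rightarrow> real) set" where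
  "F_S1 = {f. (\<forall>x. x \<notin> {0..pi} \<longrightarrow> f x = 0) \<and>
              1-lipschitz_on {0..pi} f \<and>
              (\<forall>x\<in>{0..pi}. 0 \<le> f x \<and> f x \<le> pi) \<and>
              f 0 + f pi = pi}"

definition extreme_pt :: "(real \<Rightarrow> real) set \<Rightarrow> (real \<Rightarrow> real) \<Rightarrow> bool" where
  "extreme_pt S h \<longleftrightarrow> h \<in> S \<and>
     \<not> (\<exists>f\<in>S. \<exists>g\<in>S. f \<noteq> g \<and> h = (\<lambda>x. (f x + g x) / 2))"

end

theory Submission
  imports Defs
begin

lemma sorted_bounds:
  fixes xs :: "real list"
  shows "sorted xs \<Longrightarrow> t \<in> set xs \<Longrightarrow> hd xs \<le> t \<and> t \<le> last xs"
proof (induction xs)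
  case (Cons x xs)
  show ?case
  proof (cases "xs = []")
    case True then show ?thesis using Cons by simp
  next
    case False
    then have "last xs \<in> set xs" by simp
    then show ?thesis using Cons False by auto
  qed
qed simp

definition slack :: "(real \<Rightarrow> real) \<Rightarrow> real \<Rightarrow> real \<Rightarrow> real" where
  "slack h x y = (y - x) - \<bar>h y - h x\<bar>"

fun psum :: "(real \<Rightarrow> real) \<Rightarrow> real list \<Rightarrow> real" where
  "psum h (x # y # zs) = slack h x y + psum h (y # zs)"
| "psum h _ = 0"

definition PL :: "real \<Rightarrow> real list set" where
  "PL x = {xs. xs \<noteq> [] \<and> sorted xs \<and> hd xs = 0 \<and> last xs = x}"

definition mfun :: "(real \<Rightarrow> real) \<Rightarrow> real \<Rightarrow> real" where
  "mfun h x = Inf (psum h ` PL x)"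

lemma slack_nonneg:
  assumes "1-lipschitz_on {0..pi} h" "x \<in> {0..pi}" "y \<in> {0..pi}" "x \<le> y"
  shows "slack h x y \<ge> 0"
  using lipschitz_onD[OF assms(1) assms(3) assms(2)] assms(4)
  by (simp add: slack_def dist_real_def)

lemma slack_le: "x \<le> y \<Longrightarrow> slack h x y \<le> y - x"
  by (simp add: slack_def)

lemma slack_super: "slack h x y + slack h y z \<le> slack h x z"
proof -
  have "\<bar>h z - h x\<bar> \<le> \<bar>h z - h y\<bar> + \<bar>h y - h x\<bar>"
    using abs_triangle_ineq[of "h z - h y" "h y - h x"] by simp
  then show ?thesis unfolding slack_def by linarith
qed

lemma psum_nonneg:
  assumes "1-lipschitz_on {0..pi} h"
  shows "sorted xs \<Longrightarrow> set xs \<subseteq> {0..pi} \<Longrightarrow> psum h xs \<ge> 0"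
proof (induction xs rule: induct_list012)
  case (3 x y zs)
  have "slack h x y \<ge> 0" using slack_nonneg[OF assms, of x y] 3(3,4) by auto
  moreover have "psum h (y # zs) \<ge> 0" using 3 by auto
  ultimately show ?case by simp
qed auto

lemma psum_snoc: "xs \<noteq> [] \<Longrightarrow> psum h (xs @ [y]) = psum h xs + slack h (last xs) y"
  by (induction xs rule: induct_list012) auto

lemma PL_sub: "xs \<in> PL x \<Longrightarrow> set xs \<subseteq> {0..x}"
proof
  fix t assume "xs \<in> PL x" "t \<in> set xs"
  then have "hd xs \<le> t \<and> t \<le> last xs" using sorted_bounds[of xs t] by (simp add: PL_def)
  then show "t \<in> {0..x}" using \<open>xs \<in> PL x\<close> by (simp add: PL_def)
qed

lemma psum_trunc:
  assumes lip: "1-lipschitz_on {0..pi} h"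
  shows "sorted (u # ys) \<Longrightarrow> set (u # ys) \<subseteq> {0..pi} \<Longrightarrow> u \<le> x \<Longrightarrow> x \<le> last (u # ys) \<Longrightarrow>
    psum h (takeWhile (\<lambda>t. t < x) (u # ys) @ [x]) \<le> psum h (u # ys)"
proof (induction ys arbitrary: u)
  case Nil
  then show ?case by (cases "u < x") auto
next
  case (Cons v zs)
  show ?case
  proof (cases "u < x")
    case False
    then have ux: "u = x" using Cons.prems(3) by linarith
    have tw: "takeWhile (\<lambda>t. t < x) (u # v # zs) @ [x] = [x]" using ux by simp
    have "psum h (u # v # zs) \<ge> 0" using psum_nonneg[OF lip, of "u # v # zs"] Cons.prems(1,2) by blast
    then show ?thesis unfolding tw by simp
  next
    case True
    note ux = True
    have uv: "u \<le> v" using Cons.prems(1) by simp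
    show ?thesis
    proof (cases "v < x")
      case True
      have p: "sorted (v # zs)" "set (v # zs) \<subseteq> {0..pi}" "v \<le> x" "x \<le> last (v # zs)"
        using Cons.prems(1) Cons.prems(2) True Cons.prems(4) by auto
      have IH: "psum h (takeWhile (\<lambda>t. t < x) (v # zs) @ [x]) \<le> psum h (v # zs)"
        by (rule Cons.IH[OF p])
      have e1: "takeWhile (\<lambda>t. t < x) (u # v # zs) @ [x] = u # (takeWhile (\<lambda>t. t < x) (v # zs) @ [x])"
        using ux by simp
      have e2: "takeWhile (\<lambda>t. t < x) (v # zs) @ [x] = v # (takeWhile (\<lambda>t. t < x) zs @ [x])"
        using True by simp
      have "psum h (takeWhile (\<lambda>t. t < x) (u # v # zs) @ [x])
          = slack h u v + psum h (takeWhile (\<lambda>t. t < x) (v # zs) @ [x])"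
        unfolding e1 e2 by simp
      also have "\<dots> \<le> slack h u v + psum h (v # zs)" using IH by simp
      finally show ?thesis by simp
    next
      case False
      have xpi: "x \<in> {0..pi}" "v \<in> {0..pi}" "u \<in> {0..pi}" using Cons.prems False ux
        by (auto simp: subset_iff)
      have "slack h u x \<le> slack h u x + slack h x v" using slack_nonneg[OF lip, of x v] xpi False by simp
      also have "\<dots> \<le> slack h u v" by (rule slack_super)
      finally have "slack h u x \<le> slack h u v" .
      moreover have "psum h (v # zs) \<ge> 0"
        using psum_nonneg[OF lip, of "v # zs"] Cons.prems by auto
      ultimately show ?thesis using ux False by simp
    qed
  qed
qed

context
  fixes h :: "real \<Rightarrow> real"
  assumes lip: "1-lipschitz_on {0..pi} h"
begin

lemma PL_ne: "x \<in> {0..pi} \<Longrightarrow> [0, x] \<in> PL x"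
  by (auto simp: PL_def)

lemma psum_PL_nonneg: "x \<in> {0..pi} \<Longrightarrow> xs \<in> PL x \<Longrightarrow> psum h xs \<ge> 0"
proof -
  assume a: "x \<in> {0..pi}" "xs \<in> PL x"
  have "set xs \<subseteq> {0..pi}" using PL_sub[OF a(2)] a(1) by auto
  then show ?thesis using psum_nonneg[OF lip, of xs] a(2) by (auto simp: PL_def)
qed

lemma bdd: "x \<in> {0..pi} \<Longrightarrow> bdd_below (psum h ` PL x)"
  by (rule bdd_belowI2[where m=0]) (use psum_PL_nonneg in auto)

lemma mfun_nonneg: "x \<in> {0..pi} \<Longrightarrow> mfun h x \<ge> 0"
  unfolding mfun_def using PL_ne psum_PL_nonneg by (intro cInf_greatest) auto

lemma mfun_0: "mfun h 0 = 0"
proof -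
  have "[0] \<in> PL 0" by (simp add: PL_def)
  then have "psum h [0] \<in> psum h ` PL 0" by blast
  then have "mfun h 0 \<le> psum h [0]" unfolding mfun_def using bdd[of 0]
    by (intro cInf_lower) auto
  then have "mfun h 0 \<le> 0" by simp
  then show ?thesis using mfun_nonneg[of 0] by simp
qed

lemma mfun_step:
  assumes "0 \<le> x" "x \<le> y" "y \<le> pi"
  shows "mfun h y \<le> mfun h x + slack h x y"
proof -
  have "mfun h y - slack h x y \<le> mfun h x"
    unfolding mfun_def[of h x]
  proof (rule cInf_greatest)
    show "psum h ` PL x \<noteq> {}" using PL_ne[of x] assms by auto
  next
    fix r assume "r \<in> psum h ` PL x"
    then obtain xs where xs: "xs \<in> PL x" "r = psum h xs" by auto
    have "\<forall>t\<in>set xs. t \<le> y" using PL_sub[OF xs(1)] assms by auto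
    then have "xs @ [y] \<in> PL y" using xs(1) assms
      by (auto simp: PL_def sorted_append)
    then have "mfun h y \<le> psum h (xs @ [y])"
      unfolding mfun_def using bdd[of y] assms by (intro cInf_lower) auto
    also have "\<dots> = psum h xs + slack h x y" using xs(1) by (simp add: psum_snoc PL_def)
    finally show "mfun h y - slack h x y \<le> r" using xs by simp
  qed
  then show ?thesis by simp
qed

lemma mfun_mono:
  assumes "0 \<le> x" "x \<le> y" "y \<le> pi"
  shows "mfun h x \<le> mfun h y"
  unfolding mfun_def[of h y]
proof (rule cInf_greatest)
  show "psum h ` PL y \<noteq> {}" using PL_ne[of y] assms by auto
next
  fix r assume "r \<in> psum h ` PL y"
  then obtain ys where ys: "ys \<in> PL y" "r = psum h ys" by auto
  then obtain zs where zs: "ys = 0 # zs" by (cases ys) (auto simp: PL_def)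
  let ?t = "takeWhile (\<lambda>t. t < x) ys @ [x]"
  have yss: "sorted ys" "set ys \<subseteq> {0..y}" "last ys = y" using ys PL_sub[of ys y] by (auto simp: PL_def)
  have "?t \<in> PL x"
  proof -
    have s1: "sorted (takeWhile (\<lambda>t. t < x) ys)" using yss(1) by simp
    have s2: "\<forall>t\<in>set (takeWhile (\<lambda>t. t < x) ys). t \<le> x" by (auto dest: set_takeWhileD)
    have hd: "hd ?t = 0"
    proof (cases "0 < x")
      case True then show ?thesis using zs by simp
    next
      case False then have "x = 0" using assms by simp
      then show ?thesis using zs by simp
    qed
    show ?thesis using s1 s2 hd by (auto simp: PL_def sorted_append)
  qed
  then have "mfun h x \<le> psum h ?t"
    unfolding mfun_def using bdd[of x] assms by (intro cInf_lower) auto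
  also have "\<dots> \<le> psum h ys"
  proof -
    have "set ys \<subseteq> {0..pi}" "x \<le> last ys" "0 \<le> x" using yss assms by auto
    then have B: "sorted (0 # zs)" "set (0 # zs) \<subseteq> {0..pi}" "x \<le> last (0 # zs)" "0 \<le> x"
      using yss(1) by (simp_all only: zs)
    show ?thesis using psum_trunc[OF lip B(1,2,4,3)] by (simp only: zs)
  qed
  finally show "mfun h x \<le> r" using ys by simp
qed

end

lemma F_S1D:
  assumes "h \<in> F_S1"
  shows "1-lipschitz_on {0..pi} h" "\<And>x. x \<notin> {0..pi} \<Longrightarrow> h x = 0"
    "\<And>x. x \<in> {0..pi} \<Longrightarrow> 0 \<le> h x \<and> h x \<le> pi" "h 0 + h pi = pi"
  using assms by (auto simp: F_S1_def)

lemma mfun_lip: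
  assumes lip: "1-lipschitz_on {0..pi} h" and xy: "x \<in> {0..pi}" "y \<in> {0..pi}" "x \<le> y"
  shows "0 \<le> mfun h y - mfun h x" "mfun h y - mfun h x \<le> slack h x y"
    "\<bar>mfun h y - mfun h x\<bar> \<le> y - x"
proof -
  show "0 \<le> mfun h y - mfun h x" using mfun_mono[OF lip, of x y] xy by simp
  show "mfun h y - mfun h x \<le> slack h x y" using mfun_step[OF lip, of x y] xy by simp
  then show "\<bar>mfun h y - mfun h x\<bar> \<le> y - x"
    using mfun_mono[OF lip, of x y] xy slack_le[of x y h] by simp
qed

lemma mfun_cont:
  assumes lip: "1-lipschitz_on {0..pi} h"
  shows "continuous_on {0..pi} (mfun h)"
proof -
  have "1-lipschitz_on {0..pi} (mfun h)"
  proof (rule lipschitz_onI)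
    fix x y assume xy: "x \<in> {0..pi}" "y \<in> {0..pi}"
    show "dist (mfun h x) (mfun h y) \<le> 1 * dist x y"
    proof (cases "x \<le> y")
      case True then show ?thesis using mfun_lip(3)[OF lip xy True] by (simp add: dist_real_def abs_minus_commute)
    next
      case False then show ?thesis using mfun_lip(3)[OF lip xy(2,1)] by (simp add: dist_real_def)
    qed
  qed simp
  then show ?thesis by (rule lipschitz_on_continuous_on)
qed

lemma touch_zero:
  assumes h: "h \<in> F_S1" and c: "c \<in> {0..pi}" and hc: "h c = 0 \<or> h c = pi"
  shows "mfun h pi \<le> 0"
proof -
  note hF = F_S1D[OF h]
  have "[0, c, pi] \<in> PL pi" using c by (auto simp: PL_def)
  then have "psum h [0, c, pi] \<in> psum h ` PL pi" by (rule imageI)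
  then have "mfun h pi \<le> psum h [0, c, pi]"
    unfolding mfun_def using bdd[OF hF(1), of pi] by (intro cInf_lower) auto
  also have "psum h [0, c, pi] = 0"
    using hF(3)[of 0] hF(3)[of pi] hF(4) hc by (auto simp: slack_def)
  finally show ?thesis .
qed

theorem not_extreme_if_pos:
  assumes h: "h \<in> F_S1" and Mpos: "mfun h pi > 0"
  shows "\<not> extreme_pt F_S1 h"
proof -
  note hF = F_S1D[OF h]
  note lip = hF(1)
  define M where "M = mfun h pi"
  have M0: "M > 0" using Mpos by (simp add: M_def)
  have inner: "0 < h x \<and> h x < pi" if "x \<in> {0..pi}" for x
    using touch_zero[OF h that] hF(3)[OF that] Mpos by force
  have hcont: "continuous_on {0..pi} h" using lip by (rule lipschitz_on_continuous_on)
  obtain x1 where x1: "x1 \<in> {0..pi}" "\<And>y. y \<in> {0..pi} \<Longrightarrow> h x1 \<le> h y"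
    using continuous_attains_inf[OF compact_Icc _ hcont] by (metis atLeastAtMost_iff empty_iff pi_ge_zero order_refl)
  obtain x2 where x2: "x2 \<in> {0..pi}" "\<And>y. y \<in> {0..pi} \<Longrightarrow> h y \<le> h x2"
    using continuous_attains_sup[OF compact_Icc _ hcont] by (metis atLeastAtMost_iff empty_iff pi_ge_zero order_refl)
  define \<delta> where "\<delta> = min (h x1) (pi - h x2)"
  have d0: "\<delta> > 0" using inner[OF x1(1)] inner[OF x2(1)] by (simp add: \<delta>_def)
  have dh: "\<delta> \<le> h x \<and> h x \<le> pi - \<delta>" if "x \<in> {0..pi}" for x
    using x1(2)[OF that] x2(2)[OF that] by (auto simp: \<delta>_def)
  define \<epsilon> where "\<epsilon> = min 1 (\<delta> / M)"
  have e0: "\<epsilon> > 0" "\<epsilon> \<le> 1" "\<epsilon> * M \<le> \<delta>" using d0 M0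
    by (auto simp: \<epsilon>_def min_def field_simps)
  define \<phi> where "\<phi> x = (if x \<in> {0..pi} then \<epsilon> * min (mfun h x) (M - mfun h x) else 0)" for x
  have mb: "0 \<le> mfun h x \<and> mfun h x \<le> M" if "x \<in> {0..pi}" for x
    using mfun_nonneg[OF lip that] mfun_mono[OF lip, of x pi] that by (auto simp: M_def)
  have phib: "0 \<le> \<phi> x \<and> \<phi> x \<le> \<delta>" if "x \<in> {0..pi}" for x
  proof -
    have "min (mfun h x) (M - mfun h x) \<le> M" "0 \<le> min (mfun h x) (M - mfun h x)" using mb[OF that] by auto
    then have m1: "\<epsilon> * min (mfun h x) (M - mfun h x) \<le> \<epsilon> * M" "0 \<le> \<epsilon> * min (mfun h x) (M - mfun h x)"
      using e0 by (auto intro: mult_left_mono)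
    then have "\<epsilon> * min (mfun h x) (M - mfun h x) \<le> \<delta>" using e0(3) by linarith
    then show ?thesis using that m1(2) by (simp add: \<phi>_def)
  qed
  have philip: "\<bar>\<phi> y - \<phi> x\<bar> \<le> slack h x y" if xy: "x \<in> {0..pi}" "y \<in> {0..pi}" "x \<le> y" for x y
  proof -
    have a: "\<bar>min (mfun h y) (M - mfun h y) - min (mfun h x) (M - mfun h x)\<bar> \<le> \<bar>mfun h y - mfun h x\<bar>"
      by (simp add: min_def abs_le_iff) linarith
    have "\<bar>\<phi> y - \<phi> x\<bar> = \<epsilon> * \<bar>min (mfun h y) (M - mfun h y) - min (mfun h x) (M - mfun h x)\<bar>"
      using xy e0 by (simp add: \<phi>_def abs_mult flip: right_diff_distrib)
    also have "\<dots> \<le> 1 * \<bar>mfun h y - mfun h x\<bar>" using a e0 by (intro mult_mono) auto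
    also have "\<dots> \<le> slack h x y" using mfun_lip[OF lip xy] by simp
    finally show ?thesis .
  qed
  define f where "f x = h x + \<phi> x" for x
  define g where "g x = h x - \<phi> x" for x
  have phi0: "\<phi> 0 = 0" "\<phi> pi = 0" using M0 mfun_0[OF lip] by (auto simp: \<phi>_def M_def)
  have lipfg: "1-lipschitz_on {0..pi} (\<lambda>x. h x + s * \<phi> x)" if s: "\<bar>s\<bar> = 1" for s
  proof (rule lipschitz_onI)
    have key: "\<bar>(h y + s * \<phi> y) - (h x + s * \<phi> x)\<bar> \<le> y - x"
      if xy: "x \<in> {0..pi}" "y \<in> {0..pi}" "x \<le> y" for x y
    proof -
      have "\<bar>(h y + s * \<phi> y) - (h x + s * \<phi> x)\<bar> \<le> \<bar>h y - h x\<bar> + \<bar>s\<bar> * \<bar>\<phi> y - \<phi> x\<bar>"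
        by (metis abs_mult abs_triangle_ineq add_diff_add right_diff_distrib)
      also have "\<dots> \<le> \<bar>h y - h x\<bar> + slack h x y" using philip[OF xy] s by simp
      also have "\<dots> = y - x" by (simp add: slack_def)
      finally show ?thesis .
    qed
    fix x y assume xy: "x \<in> {0..pi}" "y \<in> {0..pi}"
    show "dist (h x + s * \<phi> x) (h y + s * \<phi> y) \<le> 1 * dist x y"
    proof (cases "x \<le> y")
      case True then show ?thesis using key[OF xy True] by (simp add: dist_real_def abs_minus_commute)
    next
      case False then show ?thesis using key[OF xy(2,1)] by (simp add: dist_real_def)
    qed
  qed simp
  have fF: "f \<in> F_S1"
  proof -
    have "1-lipschitz_on {0..pi} f" using lipfg[of 1] by (simp add: f_def)
    moreover have "\<forall>x. x \<notin> {0..pi} \<longrightarrow> f x = 0" using hF(2) by (simp add: f_def \<phi>_def)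
    moreover have "\<forall>x\<in>{0..pi}. 0 \<le> f x \<and> f x \<le> pi" using dh phib by (force simp: f_def)
    moreover have "f 0 + f pi = pi" using hF(4) phi0 by (simp add: f_def)
    ultimately show ?thesis by (simp add: F_S1_def)
  qed
  have gF: "g \<in> F_S1"
  proof -
    have "1-lipschitz_on {0..pi} g" using lipfg[of "-1"] by (simp add: g_def)
    moreover have "\<forall>x. x \<notin> {0..pi} \<longrightarrow> g x = 0" using hF(2) by (simp add: g_def \<phi>_def)
    moreover have "\<forall>x\<in>{0..pi}. 0 \<le> g x \<and> g x \<le> pi" using dh phib by (force simp: g_def)
    moreover have "g 0 + g pi = pi" using hF(4) phi0 by (simp add: g_def)
    ultimately show ?thesis by (simp add: F_S1_def)
  qed
  obtain t where t: "0 \<le> t" "t \<le> pi" "mfun h t = M / 2"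
    using IVT'[of "mfun h" 0 "M / 2" pi] mfun_0[OF lip] M0 mfun_cont[OF lip] by (auto simp: M_def)
  have "\<phi> t = \<epsilon> * (M / 2)" using t by (simp add: \<phi>_def)
  moreover have "\<epsilon> * (M / 2) > 0" using e0 M0 by simp
  ultimately have "\<phi> t > 0" by simp
  then have "f t \<noteq> g t" by (simp add: f_def g_def)
  then have "f \<noteq> g" by auto
  moreover have "h = (\<lambda>x. (f x + g x) / 2)" by (simp add: f_def g_def)
  ultimately show ?thesis using fF gF unfolding extreme_pt_def by blast
qed

lemma deriv0_local:
  fixes \<phi> :: "real \<Rightarrow> real"
  assumes "(\<phi> has_real_derivative 0) (at x)" "e > 0"
  shows "\<exists>d>0. \<forall>y. \<bar>y - x\<bar> < d \<longrightarrow> \<bar>\<phi> y - \<phi> x\<bar> \<le> e * \<bar>y - x\<bar>"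
proof -
  have "((\<lambda>y. (\<phi> y - \<phi> x) / (y - x)) \<longlongrightarrow> 0) (at x)"
    using assms(1) by (simp add: has_field_derivative_iff)
  then obtain d where d: "d > 0" "\<And>y. y \<noteq> x \<Longrightarrow> dist y x < d \<Longrightarrow> dist ((\<phi> y - \<phi> x) / (y - x)) 0 < e"
    using assms(2) unfolding tendsto_iff eventually_at by blast
  show ?thesis
  proof (intro exI[of _ d] conjI allI impI)
    fix y assume y: "\<bar>y - x\<bar> < d"
    show "\<bar>\<phi> y - \<phi> x\<bar> \<le> e * \<bar>y - x\<bar>"
    proof (cases "y = x")
      case False
      then have "\<bar>(\<phi> y - \<phi> x) / (y - x)\<bar> < e" using d(2)[of y] y by (simp add: dist_real_def)
      then show ?thesis using False by (simp add: abs_divide pos_divide_less_eq)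
    qed simp
  qed (rule d(1))
qed

lemma lip_deriv0_const:
  fixes \<phi> :: "real \<Rightarrow> real"
  assumes pq: "p \<le> q" and lip: "L-lipschitz_on {p..q} \<phi>" and N: "negligible N"
    and der: "\<And>x. x \<in> {p<..<q} - N \<Longrightarrow> (\<phi> has_real_derivative 0) (at x)"
  shows "\<phi> q = \<phi> p"
proof -
  have L0: "L \<ge> 0" using lip lipschitz_on_nonneg by blast
  have bound: "\<bar>\<phi> q - \<phi> p\<bar> \<le> e * (q - p + L)" if e: "e > 0" for e
  proof -
    let ?N = "insert p (insert q N)"
    have negN: "negligible ?N" using N by simp
    then have "(indicat_real ?N has_integral 0) {p..q}"
      unfolding negligible_def by (metis box_real(2))
    then have "\<exists>\<gamma>. gauge \<gamma> \<and> (\<forall>D. D tagged_division_of {p..q} \<and> \<gamma> fine D \<longrightarrow>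
            norm ((\<Sum>(x,k)\<in>D. Henstock_Kurzweil_Integration.content k *\<^sub>R indicat_real ?N x) - 0) < e)"
      unfolding has_integral_real using e by simp
    then obtain \<gamma>1 where g1: "gauge \<gamma>1"
      and g1D: "\<And>D. D tagged_division_of {p..q} \<Longrightarrow> \<gamma>1 fine D \<Longrightarrow>
            norm ((\<Sum>(x,k)\<in>D. Henstock_Kurzweil_Integration.content k *\<^sub>R indicat_real ?N x) - 0) < e"
      by metis
    define d where "d x = (if x \<in> {p<..<q} - N then
         (SOME d. d > 0 \<and> (\<forall>y. \<bar>y - x\<bar> < d \<longrightarrow> \<bar>\<phi> y - \<phi> x\<bar> \<le> e * \<bar>y - x\<bar>)) else 1)" for x
    have dprop: "d x > 0 \<and> (x \<in> {p<..<q} - N \<longrightarrow> (\<forall>y. \<bar>y - x\<bar> < d x \<longrightarrow> \<bar>\<phi> y - \<phi> x\<bar> \<le> e * \<bar>y - x\<bar>))" for x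
    proof (cases "x \<in> {p<..<q} - N")
      case True
      from someI_ex[OF deriv0_local[OF der[OF True] e]] show ?thesis
        using True by (simp add: d_def)
    qed (auto simp: d_def)
    define \<gamma> where "\<gamma> x = \<gamma>1 x \<inter> ball x (d x)" for x
    have "gauge \<gamma>" unfolding \<gamma>_def
      using g1 dprop by (intro gauge_Int) (auto simp: gauge_def)
    then obtain D where D: "D tagged_division_of {p..q}" "\<gamma> fine D"
      using fine_division_exists_real by blast
    have f1: "\<gamma>1 fine D" using D(2) by (auto simp: \<gamma>_def fine_def)
    have small: "\<bar>\<Sum>(x,k)\<in>D. Henstock_Kurzweil_Integration.content k * indicat_real ?N x\<bar> < e"
      using g1D[OF D(1) f1] by simp
    have fin: "finite D" using D(1) by blast
    have trm: "\<bar>\<phi> (Sup K) - \<phi> (Inf K)\<bar> \<le> e * Henstock_Kurzweil_Integration.content K + L * (Henstock_Kurzweil_Integration.content K * indicat_real ?N x)"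
      if xK: "(x,K) \<in> D" for x K
    proof -
      obtain u v where K: "K = cbox u v" using D(1) xK by (meson tagged_division_ofD(4))
      have xin: "x \<in> K" using D(1) xK by blast
      have Ksub: "K \<subseteq> {p..q}" using D(1) xK by blast
      have uv: "u \<le> x" "x \<le> v" using xin K by auto
      then have K': "K = {u..v}" "Sup K = v" "Inf K = u" "Henstock_Kurzweil_Integration.content K = v - u" using K by (auto simp: content_real)
      have upq: "u \<in> {p..q}" "v \<in> {p..q}" using Ksub K' uv by auto
      have Kball: "K \<subseteq> ball x (d x)" using D(2) xK by (auto simp: \<gamma>_def fine_def)
      show ?thesis
      proof (cases "x \<in> ?N")
        case True
        have "\<bar>\<phi> v - \<phi> u\<bar> \<le> L * (v - u)"
          using lipschitz_onD[OF lip upq(2) upq(1)] uv by (simp add: dist_real_def)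
        moreover have "e * (v - u) \<ge> 0" using e uv by simp
        ultimately show ?thesis using True K' by (simp add: indicator_def)
      next
        case False
        then have xg: "x \<in> {p<..<q} - N" using D(1) xK xin Ksub by auto
        have "u \<in> K" "v \<in> K" using K' uv by auto
        then have "u \<in> ball x (d x)" "v \<in> ball x (d x)" using Kball by auto
        then have "\<bar>u - x\<bar> < d x" "\<bar>v - x\<bar> < d x" by (auto simp: dist_real_def)
        then have "\<bar>\<phi> u - \<phi> x\<bar> \<le> e * \<bar>u - x\<bar>" "\<bar>\<phi> v - \<phi> x\<bar> \<le> e * \<bar>v - x\<bar>"
          using dprop[of x] xg by auto
        then have "\<bar>\<phi> v - \<phi> u\<bar> \<le> e * (v - u)" using uv by (simp add: algebra_simps)
        then show ?thesis using False K' by (simp add: indicator_def)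
      qed
    qed
    have "\<phi> q - \<phi> p = (\<Sum>(x,K)\<in>D. \<phi> (Sup K) - \<phi> (Inf K))"
      using additive_tagged_division_1[OF pq D(1), of \<phi>] by simp
    then have "\<bar>\<phi> q - \<phi> p\<bar> \<le> (\<Sum>(x,K)\<in>D. \<bar>\<phi> (Sup K) - \<phi> (Inf K)\<bar>)"
      by (simp add: sum_abs case_prod_unfold)
    also have "\<dots> \<le> (\<Sum>(x,K)\<in>D. e * Henstock_Kurzweil_Integration.content K + L * (Henstock_Kurzweil_Integration.content K * indicat_real ?N x))"
      by (rule sum_mono) (use trm in auto)
    also have "\<dots> = e * (\<Sum>(x,K)\<in>D. Henstock_Kurzweil_Integration.content K) + L * (\<Sum>(x,K)\<in>D. Henstock_Kurzweil_Integration.content K * indicat_real ?N x)"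
      by (simp add: sum.distrib sum_distrib_left case_prod_unfold)
    also have "(\<Sum>(x,K)\<in>D. Henstock_Kurzweil_Integration.content K) = q - p"
    proof -
      have "(\<Sum>(x,K)\<in>D. Henstock_Kurzweil_Integration.content K) = (\<Sum>(x,K)\<in>D. Sup K - Inf K)"
      proof (rule sum.cong[OF refl])
        fix xK assume "xK \<in> D"
        moreover obtain x K where "xK = (x,K)" by fastforce
        ultimately have xK: "(x,K) \<in> D" by simp
        obtain u v where K: "K = cbox u v" using D(1) xK by (meson tagged_division_ofD(4))
        have xin: "x \<in> K" using D(1) xK by blast
        then show "(case xK of (x, K) \<Rightarrow> Henstock_Kurzweil_Integration.content K) = (case xK of (x, K) \<Rightarrow> Sup K - Inf K)"
          using K \<open>xK = (x,K)\<close> by (auto simp: content_real)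
      qed
      also have "\<dots> = q - p" using additive_tagged_division_1[OF pq D(1), of "\<lambda>x. x"] by simp
      finally show ?thesis .
    qed
    finally have "\<bar>\<phi> q - \<phi> p\<bar> \<le> e * (q - p) + L * (\<Sum>(x,K)\<in>D. Henstock_Kurzweil_Integration.content K * indicat_real ?N x)" .
    also have "\<dots> \<le> e * (q - p) + L * e"
      using small L0 by (intro add_left_mono mult_left_mono) auto
    finally show ?thesis by (simp add: algebra_simps)
  qed
  show ?thesis
  proof (rule ccontr)
    assume ne: "\<phi> q \<noteq> \<phi> p"
    define e where "e = \<bar>\<phi> q - \<phi> p\<bar> / (2 * (q - p + L + 1))"
    have pos: "q - p + L + 1 > 0" using pq L0 by simp
    have e: "e > 0" using ne pos by (simp add: e_def)
    have "\<bar>\<phi> q - \<phi> p\<bar> \<le> e * (q - p + L)" by (rule bound[OF e])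
    also have "\<dots> < e * (2 * (q - p + L + 1))" using e pq L0 by (intro mult_strict_left_mono) auto
    also have "\<dots> = \<bar>\<phi> q - \<phi> p\<bar>" using pos by (simp add: e_def)
    finally show False by simp
  qed
qed

lemma squeeze_ineq:
  fixes D a b c d :: real
  assumes D: "\<bar>D\<bar> = 1" and fa: "\<bar>a\<bar> \<le> \<bar>d\<bar>" and gb: "\<bar>b\<bar> \<le> \<bar>d\<bar>" and c: "c = (a + b) / 2"
  shows "\<bar>a - D * d\<bar> \<le> 2 * \<bar>c - D * d\<bar>"
proof -
  have "D = 1 \<or> D = -1" using D by auto
  then show ?thesis using fa gb c by (auto simp: abs_le_iff abs_if split: if_splits)
qed

lemma deriv_squeeze:
  fixes f g h :: "real \<Rightarrow> real"
  assumes lf: "1-lipschitz_on {0..pi} f" and lg: "1-lipschitz_on {0..pi} g"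
    and x: "x \<in> {0<..<pi}" and hfg: "\<And>y. h y = (f y + g y) / 2"
    and hd: "(h has_real_derivative D) (at x)" and D: "\<bar>D\<bar> = 1"
  shows "(f has_real_derivative D) (at x)"
proof -
  let ?Q = "\<lambda>k y. (k y - k x) / (y - x)"
  have hq: "(?Q h \<longlongrightarrow> D) (at x)" using hd by (simp add: has_field_derivative_iff)
  then have "((\<lambda>y. ?Q h y - D) \<longlongrightarrow> 0) (at x)" by (simp add: Lim_null[symmetric])
  then have "((\<lambda>y. 2 * \<bar>?Q h y - D\<bar>) \<longlongrightarrow> 0) (at x)"
    using tendsto_mult_right_zero tendsto_rabs_zero by blast
  moreover have "eventually (\<lambda>y. norm (?Q f y - D) \<le> 2 * \<bar>?Q h y - D\<bar>) (at x)"
  proof -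
    have "min x (pi - x) > 0" using x by simp
    then have "eventually (\<lambda>y. y \<in> ball x (min x (pi - x))) (at x)"
      unfolding eventually_at by (intro exI[of _ "min x (pi - x)"]) (auto simp: dist_commute)
    moreover have "eventually (\<lambda>y. y \<noteq> x) (at x)" by (simp add: eventually_at_filter)
    ultimately show ?thesis
    proof eventually_elim
      case (elim y)
      then have y: "y \<in> {0..pi}" "y - x \<noteq> 0" using x by (auto simp: dist_real_def abs_less_iff)
      have x': "x \<in> {0..pi}" using x by simp
      have a: "\<bar>f y - f x\<bar> \<le> \<bar>y - x\<bar>" using lipschitz_onD[OF lf y(1) x'] by (simp add: dist_real_def)
      have b: "\<bar>g y - g x\<bar> \<le> \<bar>y - x\<bar>" using lipschitz_onD[OF lg y(1) x'] by (simp add: dist_real_def)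
      have c: "h y - h x = ((f y - f x) + (g y - g x)) / 2" using hfg by (simp add: field_simps)
      have "\<bar>(f y - f x) - D * (y - x)\<bar> \<le> 2 * \<bar>(h y - h x) - D * (y - x)\<bar>"
        by (rule squeeze_ineq[OF D a b c])
      then have "\<bar>(f y - f x) - D * (y - x)\<bar> / \<bar>y - x\<bar> \<le> (2 * \<bar>(h y - h x) - D * (y - x)\<bar>) / \<bar>y - x\<bar>"
        by (rule divide_right_mono) simp
      also have "\<dots> = 2 * (\<bar>(h y - h x) - D * (y - x)\<bar> / \<bar>y - x\<bar>)" by simp
      finally have ineq: "\<bar>(f y - f x) - D * (y - x)\<bar> / \<bar>y - x\<bar> \<le> 2 * (\<bar>(h y - h x) - D * (y - x)\<bar> / \<bar>y - x\<bar>)" .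
      have eq: "\<bar>(k y - k x) - D * (y - x)\<bar> / \<bar>y - x\<bar> = \<bar>?Q k y - D\<bar>" for k
        using y(2) by (simp add: abs_divide[symmetric] diff_divide_distrib)
      show ?case using ineq unfolding eq real_norm_def .
    qed
  qed
  ultimately have "((\<lambda>y. ?Q f y - D) \<longlongrightarrow> 0) (at x)"
    by (rule Lim_null_comparison[rotated])
  then have "(?Q f \<longlongrightarrow> D) (at x)" by (simp add: Lim_null[symmetric])
  then show ?thesis by (simp add: has_field_derivative_iff)
qed

theorem extreme_if_ae:
  assumes h: "h \<in> F_S1"
    and ae: "AE x in lebesgue. x \<in> {0..pi} \<longrightarrow> (\<exists>D. (h has_real_derivative D) (at x) \<and> \<bar>D\<bar> = 1)"
  shows "extreme_pt F_S1 h"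
proof -
  obtain N where N: "{x \<in> space lebesgue. \<not> (x \<in> {0..pi} \<longrightarrow> (\<exists>D. (h has_real_derivative D) (at x) \<and> \<bar>D\<bar> = 1))} \<subseteq> N"
    "emeasure lebesgue N = 0" "N \<in> sets lebesgue"
    using ae by (rule AE_E)
  have negN: "negligible N" using N(2,3) by (simp add: negligible_iff_null_sets null_sets_def)
  have good: "\<exists>D. (h has_real_derivative D) (at x) \<and> \<bar>D\<bar> = 1" if "x \<in> {0<..<pi} - N" for x
  proof -
    have "x \<notin> {x \<in> space lebesgue. \<not> (x \<in> {0..pi} \<longrightarrow> (\<exists>D. (h has_real_derivative D) (at x) \<and> \<bar>D\<bar> = 1))}"
      using N(1) that by blast
    then show ?thesis using that by simp
  qed
  show ?thesis unfolding extreme_pt_def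
  proof (intro conjI h notI)
    assume "\<exists>f\<in>F_S1. \<exists>g\<in>F_S1. f \<noteq> g \<and> h = (\<lambda>x. (f x + g x) / 2)"
    then obtain f g where fg: "f \<in> F_S1" "g \<in> F_S1" "f \<noteq> g" "h = (\<lambda>x. (f x + g x) / 2)" by blast
    note fF = F_S1D[OF fg(1)] and gF = F_S1D[OF fg(2)]
    define d where "d x = f x - g x" for x
    have dlip: "2-lipschitz_on {0..pi} d"
      using lipschitz_on_diff[OF fF(1) gF(1)] by (simp add: d_def[abs_def])
    have dder: "(d has_real_derivative 0) (at x)" if xN: "x \<in> {0<..<pi} - N" for x
    proof -
      obtain D where D: "(h has_real_derivative D) (at x)" "\<bar>D\<bar> = 1" using good[OF xN] by blast
      have x: "x \<in> {0<..<pi}" using xN by simp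
      have "(f has_real_derivative D) (at x)"
        by (rule deriv_squeeze[OF fF(1) gF(1) x _ D]) (simp add: fg(4))
      moreover have "(g has_real_derivative D) (at x)"
        by (rule deriv_squeeze[OF gF(1) fF(1) x _ D]) (simp add: fg(4) add.commute)
      ultimately have "((\<lambda>x. f x - g x) has_real_derivative D - D) (at x)" by (rule DERIV_diff)
      then show ?thesis by (simp add: d_def[abs_def])
    qed
    have dconst: "d y = d 0" if y: "y \<in> {0..pi}" for y
    proof (rule lip_deriv0_const[of 0 y 2 d N])
      show "0 \<le> y" using y by simp
      show "2-lipschitz_on {0..y} d" using y by (intro lipschitz_on_subset[OF dlip]) auto
      show "negligible N" by (rule negN)
      fix x assume "x \<in> {0<..<y} - N"
      then show "(d has_real_derivative 0) (at x)" using y by (intro dder) auto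
    qed
    have "d 0 + d pi = 0" using fF(4) gF(4) by (simp add: d_def)
    moreover have "d pi = d 0" using dconst[of pi] by simp
    ultimately have d0: "d 0 = 0" by simp
    have "f x = g x" for x
    proof (cases "x \<in> {0..pi}")
      case True then show ?thesis using dconst[OF True] d0 by (simp add: d_def)
    next
      case False then show ?thesis using fF(2) gF(2) by simp
    qed
    then show False using fg(3) by auto
  qed
qed

lemma open_sets_lebesgue: "open (S :: real set) \<Longrightarrow> S \<in> sets lebesgue"
  by (metis borel_open sets_completionI_sets sets_lborel)

lemma disjoint_balls_order:
  fixes x y r s :: real
  assumes "r > 0" "s > 0" "ball x r \<inter> ball y s = {}" "x \<le> y"
  shows "x + r \<le> y - s"
proof (rule ccontr)
  assume nt: "\<not> ?thesis"
  define t where "t = (max (x - r) (y - s) + min (x + r) (y + s)) / 2"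
  have "t \<in> ball x r" "t \<in> ball y s" using assms nt
    by (auto simp: t_def ball_eq_greaterThanLessThan max_def min_def)
  then show False using assms(3) by blast
qed

lemma expand_null:
  fixes F :: "real \<Rightarrow> real" and p q c :: real
  assumes mono: "\<And>s t. s \<in> {p..q} \<Longrightarrow> t \<in> {p..q} \<Longrightarrow> s \<le> t \<Longrightarrow> F s \<le> F t"
    and cont: "continuous_on {p..q} F"
    and E: "E \<subseteq> {p<..<q}" and neg: "negligible (F ` E)" and c: "c > 0"
    and ex: "\<And>x \<delta>. x \<in> E \<Longrightarrow> \<delta> > 0 \<Longrightarrow> \<exists>y\<in>{p..q}. y \<noteq> x \<and> \<bar>y - x\<bar> < \<delta> \<and> c * \<bar>y - x\<bar> \<le> \<bar>F y - F x\<bar>"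
  shows "negligible E"
  unfolding negligible_outer_le
proof (intro allI impI)
  fix e :: real assume e: "e > 0"
  have FEs: "F ` E \<in> sets lebesgue" "emeasure lebesgue (F ` E) = 0"
    using neg by (auto simp: negligible_iff_null_sets null_sets_def)
  have ec: "e * c / 2 > 0" using e c by simp
  obtain Ov where Ov: "open Ov" "F ` E \<subseteq> Ov" "emeasure lebesgue (Ov - F ` E) < ennreal (e * c / 2)"
    using sets_lebesgue_outer_open[OF FEs(1) ec] by metis
  have Os: "Ov \<in> sets lebesgue" using Ov(1) by (rule open_sets_lebesgue)
  have "emeasure lebesgue Ov \<le> emeasure lebesgue (Ov - F ` E) + emeasure lebesgue (F ` E)"
    using emeasure_subadditive[of "Ov - F ` E" lebesgue "F ` E"] Os FEs Ov(2)
    by (simp add: Un_absorb2 sets.Diff)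
  with FEs(2) Ov(3) have Om: "emeasure lebesgue Ov < ennreal (e * c / 2)" by simp
  define K where "K = {(x, r). x \<in> E \<and> 0 < r \<and> p \<le> x - r \<and> x + r \<le> q \<and>
       c * r \<le> F (x + r) - F (x - r) \<and> {F (x - r)..F (x + r)} \<subseteq> Ov}"
  have cover: "\<exists>i. i \<in> K \<and> x \<in> ball (fst i) (snd i) \<and> snd i < d" if x: "x \<in> E" and d: "d > 0" for x d
  proof -
    have xpq: "x \<in> {p<..<q}" using x E by auto
    have "F x \<in> Ov" using x Ov(2) by auto
    then obtain \<eta> where \<eta>: "\<eta> > 0" "ball (F x) \<eta> \<subseteq> Ov" using Ov(1) open_contains_ball by blast
    have "continuous (at x within {p..q}) F" using cont xpq by (simp add: continuous_on_eq_continuous_within)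
    then obtain \<delta>1 where \<delta>1: "\<delta>1 > 0" "\<And>t. t \<in> {p..q} \<Longrightarrow> dist t x < \<delta>1 \<Longrightarrow> dist (F t) (F x) < \<eta>"
      using \<eta>(1) unfolding continuous_within_eps_delta by blast
    define \<delta> where "\<delta> = min (min d \<delta>1) (min (x - p) (q - x))"
    have \<delta>: "\<delta> > 0" using d \<delta>1 xpq by (simp add: \<delta>_def)
    obtain y where y: "y \<in> {p..q}" "y \<noteq> x" "\<bar>y - x\<bar> < \<delta>" "c * \<bar>y - x\<bar> \<le> \<bar>F y - F x\<bar>"
      using ex[OF x \<delta>] by blast
    define r where "r = \<bar>y - x\<bar>"
    have r: "r > 0" "r < d" "r < \<delta>1" "p \<le> x - r" "x + r \<le> q" using y \<delta> by (auto simp: r_def \<delta>_def)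
    have in1: "x - r \<in> {p..q}" "x + r \<in> {p..q}" "x \<in> {p..q}" using r xpq by auto
    have Fo: "F (x - r) \<le> F x" "F x \<le> F (x + r)" using mono in1 r by auto
    have "F (x - r) \<le> F y" "F y \<le> F (x + r)" using mono[OF in1(1) y(1)] mono[OF y(1) in1(2)] by (auto simp: r_def)
    then have "\<bar>F y - F x\<bar> \<le> F (x + r) - F (x - r)" using Fo by auto
    then have cr: "c * r \<le> F (x + r) - F (x - r)" using y(4) by (simp add: r_def)
    have "dist (F (x - r)) (F x) < \<eta>" "dist (F (x + r)) (F x) < \<eta>"
      using \<delta>1(2)[OF in1(1)] \<delta>1(2)[OF in1(2)] r by (auto simp: dist_real_def)
    then have "{F (x - r)..F (x + r)} \<subseteq> ball (F x) \<eta>" using Fo by (auto simp: dist_real_def)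
    then have "{F (x - r)..F (x + r)} \<subseteq> Ov" using \<eta>(2) by blast
    then have "(x, r) \<in> K" using x r cr by (simp add: K_def)
    then show ?thesis using r by (intro exI[of _ "(x, r)"]) auto
  qed
  obtain C where C: "countable C" "C \<subseteq> K"
    and pw: "pairwise (\<lambda>i j. disjnt (ball (fst i) (snd i)) (ball (fst j) (snd j))) C"
    and negC: "negligible (E - (\<Union>i\<in>C. ball (fst i) (snd i)))"
    by (rule Vitali_covering_theorem_balls[of E K fst snd, OF cover])
  define B where "B i = ball (fst i) (snd i)" for i :: "real \<times> real"
  define J where "J i = {F (fst i - snd i)<..<F (fst i + snd i)}" for i :: "real \<times> real"
  have Kp: "fst i \<in> E" "snd i > 0" "p \<le> fst i - snd i" "fst i + snd i \<le> q"
    "c * snd i \<le> F (fst i + snd i) - F (fst i - snd i)" "{F (fst i - snd i)..F (fst i + snd i)} \<subseteq> Ov"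
    if "i \<in> C" for i
  proof -
    have "i \<in> K" using that C(2) by blast
    then have "fst i \<in> E \<and> snd i > 0 \<and> p \<le> fst i - snd i \<and> fst i + snd i \<le> q \<and>
      c * snd i \<le> F (fst i + snd i) - F (fst i - snd i) \<and> {F (fst i - snd i)..F (fst i + snd i)} \<subseteq> Ov"
      by (simp add: K_def case_prod_beta)
    then show "fst i \<in> E" "snd i > 0" "p \<le> fst i - snd i" "fst i + snd i \<le> q"
      "c * snd i \<le> F (fst i + snd i) - F (fst i - snd i)" "{F (fst i - snd i)..F (fst i + snd i)} \<subseteq> Ov"
      by blast+
  qed
  have disjB: "disjoint_family_on B C"
    using pw unfolding disjoint_family_on_def pairwise_def disjnt_def B_def by blast
  have disjJ: "disjoint_family_on J C"
    unfolding disjoint_family_on_def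
  proof (intro ballI impI)
    fix i j assume ij: "i \<in> C" "j \<in> C" "i \<noteq> j"
    have bij: "B i \<inter> B j = {}" using disjB ij by (simp add: disjoint_family_on_def)
    have ord: "J i \<inter> J j = {}" if ij2: "i \<in> C" "j \<in> C" "B i \<inter> B j = {}" "fst i \<le> fst j" for i j
    proof -
      have "fst i + snd i \<le> fst j - snd j"
        using disjoint_balls_order[of "snd i" "snd j" "fst i" "fst j"] Kp[OF ij2(1)] Kp[OF ij2(2)] ij2(3,4)
        by (simp add: B_def)
      then have "F (fst i + snd i) \<le> F (fst j - snd j)" using mono Kp[OF ij2(1)] Kp[OF ij2(2)] by auto
      then show ?thesis by (auto simp: J_def)
    qed
    show "J i \<inter> J j = {}"
    proof (cases "fst i \<le> fst j")
      case True then show ?thesis using ord[OF ij(1,2) bij] by simp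
    next
      case False then show ?thesis using ord[OF ij(2,1)] bij by (auto simp: Int_commute)
    qed
  qed
  have Bs: "B i \<in> sets lebesgue" for i by (simp add: B_def open_sets_lebesgue)
  have Js: "J i \<in> sets lebesgue" for i by (simp add: J_def open_sets_lebesgue)
  have eB: "emeasure lebesgue (B i) = ennreal (2 * snd i)" if "i \<in> C" for i
    using Kp[OF that] by (simp add: B_def ball_eq_greaterThanLessThan emeasure_completion)
  have eJ: "emeasure lebesgue (J i) = ennreal (F (fst i + snd i) - F (fst i - snd i))" if "i \<in> C" for i
  proof -
    have "F (fst i - snd i) \<le> F (fst i + snd i)" using Kp[OF that] mono by auto
    then show ?thesis by (simp add: J_def emeasure_completion)
  qed
  have JO: "(\<Union>i\<in>C. J i) \<subseteq> Ov" using Kp by (force simp: J_def)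
  have "emeasure lebesgue (\<Union>i\<in>C. B i) = (\<integral>\<^sup>+i. emeasure lebesgue (B i) \<partial>count_space C)"
    by (rule emeasure_UN_countable[OF _ C(1) disjB]) (rule Bs)
  also have "\<dots> \<le> (\<integral>\<^sup>+i. ennreal (2 / c) * emeasure lebesgue (J i) \<partial>count_space C)"
  proof (rule nn_integral_mono)
    fix i assume "i \<in> space (count_space C)"
    then have i: "i \<in> C" by simp
    have "2 * snd i \<le> (2 / c) * (F (fst i + snd i) - F (fst i - snd i))"
      using Kp(5)[OF i] c by (simp add: field_simps)
    then have "ennreal (2 * snd i) \<le> ennreal ((2 / c) * (F (fst i + snd i) - F (fst i - snd i)))"
      by (rule ennreal_leI)
    also have "\<dots> = ennreal (2 / c) * ennreal (F (fst i + snd i) - F (fst i - snd i))"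
    proof (rule ennreal_mult)
      show "0 \<le> 2 / c" using c by simp
      show "0 \<le> F (fst i + snd i) - F (fst i - snd i)"
        using Kp(2,5)[OF i] c by (smt (verit) mult_pos_pos)
    qed
    finally show "emeasure lebesgue (B i) \<le> ennreal (2 / c) * emeasure lebesgue (J i)"
      using eB[OF i] eJ[OF i] by simp
  qed
  also have "\<dots> = ennreal (2 / c) * (\<integral>\<^sup>+i. emeasure lebesgue (J i) \<partial>count_space C)"
    by (rule nn_integral_cmult) simp
  finally have I1: "emeasure lebesgue (\<Union>i\<in>C. B i) \<le> ennreal (2 / c) * (\<integral>\<^sup>+i. emeasure lebesgue (J i) \<partial>count_space C)" .
  have I2: "(\<integral>\<^sup>+i. emeasure lebesgue (J i) \<partial>count_space C) = emeasure lebesgue (\<Union>i\<in>C. J i)"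
    by (rule emeasure_UN_countable[symmetric, OF _ C(1) disjJ]) (rule Js)
  have I3: "emeasure lebesgue (\<Union>i\<in>C. J i) \<le> emeasure lebesgue Ov" using JO Os by (intro emeasure_mono) auto
  have "ennreal (2 / c) * emeasure lebesgue (\<Union>i\<in>C. J i) \<le> ennreal (2 / c) * emeasure lebesgue Ov"
    by (rule mult_left_mono[OF I3]) simp
  then have "emeasure lebesgue (\<Union>i\<in>C. B i) \<le> ennreal (2 / c) * emeasure lebesgue Ov"
    using I1 I2 by simp
  also have "\<dots> \<le> ennreal (2 / c) * ennreal (e * c / 2)"
    using Om by (intro mult_left_mono) auto
  also have "\<dots> = ennreal ((2 / c) * (e * c / 2))" using c e by (intro ennreal_mult[symmetric]) auto
  also have "(2 / c) * (e * c / 2) = e" using c by (simp add: field_simps)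
  finally have UB: "emeasure lebesgue (\<Union>i\<in>C. B i) \<le> ennreal e" .
  have UBs: "(\<Union>i\<in>C. B i) \<in> sets lebesgue" by (simp add: B_def open_sets_lebesgue open_UN)
  have UBf: "(\<Union>i\<in>C. B i) \<in> lmeasurable" using UBs UB by (intro fmeasurableI) (auto simp: top_unique intro: le_less_trans)
  have mUB: "measure lebesgue (\<Union>i\<in>C. B i) \<le> e"
    using UB emeasure_eq_measure2[OF UBf] e by simp
  define T where "T = (E - (\<Union>i\<in>C. B i)) \<union> (\<Union>i\<in>C. B i)"
  have nullpart: "E - (\<Union>i\<in>C. B i) \<in> null_sets lebesgue" using negC by (simp add: B_def negligible_iff_null_sets)
  have "T \<in> lmeasurable" unfolding T_def using nullpart UBf
    by (metis fmeasurableI_null_sets fmeasurable.Un)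
  moreover have "measure lebesgue T = measure lebesgue (\<Union>i\<in>C. B i)"
    unfolding T_def using measure_Un_null_set[OF UBs nullpart] by (simp add: Un_commute)
  moreover have "E \<subseteq> T" by (auto simp: T_def)
  ultimately show "\<exists>T. E \<subseteq> T \<and> T \<in> lmeasurable \<and> measure lebesgue T \<le> e" using mUB by auto
qed

fun Aset :: "(real \<Rightarrow> real) \<Rightarrow> real list \<Rightarrow> real set" where
  "Aset h (x # y # zs) = (if h y \<le> h x then {x..y} else {}) \<union> Aset h (y # zs)"
| "Aset h _ = {}"

fun Bset :: "(real \<Rightarrow> real) \<Rightarrow> real list \<Rightarrow> real set" where
  "Bset h (x # y # zs) = (if h x \<le> h y then {x..y} else {}) \<union> Bset h (y # zs)"
| "Bset h _ = {}"

fun AI :: "(real \<Rightarrow> real) \<Rightarrow> real list \<Rightarrow> real set" where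
  "AI h (x # y # zs) = (if h y \<le> h x then {x + h x..y + h y} else {}) \<union> AI h (y # zs)"
| "AI h _ = {}"

fun BI :: "(real \<Rightarrow> real) \<Rightarrow> real list \<Rightarrow> real set" where
  "BI h (x # y # zs) = (if h x \<le> h y then {x - h x..y - h y} else {}) \<union> BI h (y # zs)"
| "BI h _ = {}"

lemma AB_cover:
  fixes xs :: "real list"
  shows "sorted xs \<Longrightarrow> xs \<noteq> [] \<Longrightarrow> t \<in> {hd xs..last xs} \<Longrightarrow> t \<in> Aset h xs \<union> Bset h xs \<union> {hd xs}"
proof (induction xs rule: induct_list012)
  case (2 x)
  then show ?case by simp
next
  case (3 x y zs)
  show ?case
  proof (cases "t \<le> y")
    case True
    then have "t \<in> {x..y}" using 3 by simp
    then show ?thesis by (cases "h y \<le> h x") auto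
  next
    case False
    then have "t \<in> {hd (y # zs)..last (y # zs)}" using "3.prems" by simp
    then have "t \<in> Aset h (y # zs) \<union> Bset h (y # zs) \<union> {y}" using 3 by simp
    then show ?thesis using False by auto
  qed
qed simp

context
  fixes h :: "real \<Rightarrow> real"
  assumes lip: "1-lipschitz_on {0..pi} h"
begin

lemma lipD: "x \<in> {0..pi} \<Longrightarrow> y \<in> {0..pi} \<Longrightarrow> \<bar>h y - h x\<bar> \<le> \<bar>y - x\<bar>"
  using lipschitz_onD[OF lip, of y x] by (simp add: dist_real_def)

lemma a_mono: "s \<in> {0..pi} \<Longrightarrow> t \<in> {0..pi} \<Longrightarrow> s \<le> t \<Longrightarrow> s + h s \<le> t + h t"
  using lipD[of s t] by (simp add: abs_le_iff)

lemma b_mono: "s \<in> {0..pi} \<Longrightarrow> t \<in> {0..pi} \<Longrightarrow> s \<le> t \<Longrightarrow> s - h s \<le> t - h t"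
  using lipD[of s t] by (simp add: abs_le_iff)

lemma imA: "sorted xs \<Longrightarrow> set xs \<subseteq> {0..pi} \<Longrightarrow> (\<lambda>t. t + h t) ` Aset h xs \<subseteq> AI h xs"
proof (induction xs rule: induct_list012)
  case (3 x y zs)
  have "(\<lambda>t. t + h t) ` {x..y} \<subseteq> {x + h x..y + h y}"
  proof
    fix u assume "u \<in> (\<lambda>t. t + h t) ` {x..y}"
    then obtain t where t: "t \<in> {x..y}" "u = t + h t" by auto
    have "x \<in> {0..pi}" "y \<in> {0..pi}" "t \<in> {0..pi}" using 3(3,4) t(1) by auto
    then show "u \<in> {x + h x..y + h y}" using a_mono[of x t] a_mono[of t y] t by auto
  qed
  then show ?case using 3 by (auto split: if_splits)
qed auto

lemma imB: "sorted xs \<Longrightarrow> set xs \<subseteq> {0..pi} \<Longrightarrow> (\<lambda>t. t - h t) ` Bset h xs \<subseteq> BI h xs"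
proof (induction xs rule: induct_list012)
  case (3 x y zs)
  have "(\<lambda>t. t - h t) ` {x..y} \<subseteq> {x - h x..y - h y}"
  proof
    fix u assume "u \<in> (\<lambda>t. t - h t) ` {x..y}"
    then obtain t where t: "t \<in> {x..y}" "u = t - h t" by auto
    have "x \<in> {0..pi}" "y \<in> {0..pi}" "t \<in> {0..pi}" using 3(3,4) t(1) by auto
    then show "u \<in> {x - h x..y - h y}" using b_mono[of x t] b_mono[of t y] t by auto
  qed
  then show ?case using 3 by (auto split: if_splits)
qed auto

lemma Icc_lm: "{l..u::real} \<in> lmeasurable" by (metis box_real(2) lmeasurable_cbox)

lemma measA: "sorted xs \<Longrightarrow> set xs \<subseteq> {0..pi} \<Longrightarrow> AI h xs \<in> lmeasurable \<and> measure lebesgue (AI h xs) \<le> psum h xs"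
proof (induction xs rule: induct_list012)
  case (3 x y zs)
  let ?I = "if h y \<le> h x then {x + h x..y + h y} else {}"
  have xy: "x \<in> {0..pi}" "y \<in> {0..pi}" "x \<le> y" using 3(3,4) by auto
  have IH: "AI h (y # zs) \<in> lmeasurable" "measure lebesgue (AI h (y # zs)) \<le> psum h (y # zs)"
    using 3 by auto
  have Il: "?I \<in> lmeasurable" using Icc_lm by simp
  have Im: "measure lebesgue ?I \<le> slack h x y"
  proof (cases "h y \<le> h x")
    case True
    have "x + h x \<le> y + h y" using a_mono[OF xy] .
    then have "measure lebesgue ?I = (y + h y) - (x + h x)" using True by (simp add: measure_completion)
    also have "\<dots> = slack h x y" using True by (simp add: slack_def)
    finally show ?thesis by simp
  next
    case False then show ?thesis using slack_nonneg[OF lip xy] by simp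
  qed
  have "AI h (x # y # zs) = ?I \<union> AI h (y # zs)" by simp
  moreover have "measure lebesgue (?I \<union> AI h (y # zs)) \<le> measure lebesgue ?I + measure lebesgue (AI h (y # zs))"
    using Il IH(1) by (intro measure_Un_le) auto
  ultimately show ?case using Il IH Im by auto
qed auto

lemma measB: "sorted xs \<Longrightarrow> set xs \<subseteq> {0..pi} \<Longrightarrow> BI h xs \<in> lmeasurable \<and> measure lebesgue (BI h xs) \<le> psum h xs"
proof (induction xs rule: induct_list012)
  case (3 x y zs)
  let ?I = "if h x \<le> h y then {x - h x..y - h y} else {}"
  have xy: "x \<in> {0..pi}" "y \<in> {0..pi}" "x \<le> y" using 3(3,4) by auto
  have IH: "BI h (y # zs) \<in> lmeasurable" "measure lebesgue (BI h (y # zs)) \<le> psum h (y # zs)"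
    using 3 by auto
  have Il: "?I \<in> lmeasurable" using Icc_lm by simp
  have Im: "measure lebesgue ?I \<le> slack h x y"
  proof (cases "h x \<le> h y")
    case True
    have "x - h x \<le> y - h y" using b_mono[OF xy] .
    then have "measure lebesgue ?I = (y - h y) - (x - h x)" using True by (simp add: measure_completion)
    also have "\<dots> = slack h x y" using True by (simp add: slack_def)
    finally show ?thesis by simp
  next
    case False then show ?thesis using slack_nonneg[OF lip xy] by simp
  qed
  have "BI h (x # y # zs) = ?I \<union> BI h (y # zs)" by simp
  moreover have "measure lebesgue (?I \<union> BI h (y # zs)) \<le> measure lebesgue ?I + measure lebesgue (BI h (y # zs))"
    using Il IH(1) by (intro measure_Un_le) auto
  ultimately show ?case using Il IH Im by auto
qed auto

end

lemma deriv_from_small: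
  fixes h :: "real \<Rightarrow> real"
  assumes x: "x \<in> {0<..<pi}"
    and sm: "\<And>n. \<exists>\<delta>>0. \<forall>y\<in>{0..pi}. y \<noteq> x \<and> \<bar>y - x\<bar> < \<delta> \<longrightarrow>
              \<bar>h y - h x - D * (y - x)\<bar> < inverse (real (Suc n)) * \<bar>y - x\<bar>"
  shows "(h has_real_derivative D) (at x)"
proof -
  have "((\<lambda>y. (h y - h x) / (y - x) - D) \<longlongrightarrow> 0) (at x)"
    unfolding tendsto_iff eventually_at
  proof (intro allI impI)
    fix \<epsilon> :: real assume e: "\<epsilon> > 0"
    obtain n where n: "inverse (real (Suc n)) < \<epsilon>" using reals_Archimedean[OF e] by blast
    obtain \<delta> where \<delta>: "\<delta> > 0" "\<forall>y\<in>{0..pi}. y \<noteq> x \<and> \<bar>y - x\<bar> < \<delta> \<longrightarrow>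
              \<bar>h y - h x - D * (y - x)\<bar> < inverse (real (Suc n)) * \<bar>y - x\<bar>"
      using sm[of n] by blast
    show "\<exists>d>0. \<forall>y\<in>UNIV. y \<noteq> x \<and> dist y x < d \<longrightarrow> dist ((h y - h x) / (y - x) - D) 0 < \<epsilon>"
    proof (intro exI[of _ "min \<delta> (min x (pi - x))"] conjI ballI impI)
      show "0 < min \<delta> (min x (pi - x))" using \<delta>(1) x by simp
      fix y assume "y \<in> UNIV" and y: "y \<noteq> x \<and> dist y x < min \<delta> (min x (pi - x))"
      then have y1: "y \<in> {0..pi}" "y \<noteq> x" "\<bar>y - x\<bar> < \<delta>" using x by (auto simp: dist_real_def abs_less_iff)
      have yx: "\<bar>y - x\<bar> > 0" using y1(2) by simp
      have "\<bar>h y - h x - D * (y - x)\<bar> < inverse (real (Suc n)) * \<bar>y - x\<bar>" using \<delta>(2) y1 by blast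
      then have "\<bar>h y - h x - D * (y - x)\<bar> / \<bar>y - x\<bar> < inverse (real (Suc n))"
        using yx by (simp add: divide_less_eq)
      moreover have "\<bar>h y - h x - D * (y - x)\<bar> / \<bar>y - x\<bar> = \<bar>(h y - h x) / (y - x) - D\<bar>"
        using y1(2) by (simp add: abs_divide[symmetric] diff_divide_distrib)
      ultimately show "dist ((h y - h x) / (y - x) - D) 0 < \<epsilon>" using n by (simp add: dist_real_def)
    qed
  qed
  then have "((\<lambda>y. (h y - h x) / (y - x)) \<longlongrightarrow> D) (at x)" by (simp add: Lim_null[symmetric])
  then show ?thesis by (simp add: has_field_derivative_iff)
qed

lemma geo_sum: "(\<Sum>i\<le>N. (1/2::real) ^ i) = 2 - (1/2) ^ N"
  by (induction N) (auto simp: field_simps)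

lemma geo_bound: "(\<Sum>i\<le>N. (1/2::real) ^ (n + i)) \<le> 2 * (1/2) ^ n"
proof -
  have "(\<Sum>i\<le>N. (1/2::real) ^ (n + i)) = (1/2) ^ n * (\<Sum>i\<le>N. (1/2) ^ i)"
    by (simp add: power_add sum_distrib_left)
  also have "\<dots> \<le> (1/2) ^ n * 2" unfolding geo_sum by (intro mult_left_mono) auto
  finally show ?thesis by simp
qed

lemma pow_half_le: "(1/2::real) ^ n \<le> inverse (real (Suc n))"
proof -
  have "real (Suc n) \<le> 2 ^ n" by (induction n) auto
  then show ?thesis by (simp add: power_one_over field_simps)
qed

lemma null_union_bound:
  assumes meas: "\<And>k. S k \<in> lmeasurable \<and> measure lebesgue (S k) \<le> (1/2) ^ k"
    and e: "e > 0"
  shows "\<exists>T. (\<Union>k\<in>{n..}. S k) \<subseteq> T \<and> T \<in> lmeasurable \<and> measure lebesgue T \<le> 2 * (1/2) ^ n"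
proof -
  define T where "T = (\<Union>i. S (n + i))"
  have fin: "measure lebesgue (\<Union>i\<le>N. S (n + i)) \<le> 2 * (1/2) ^ n" for N
  proof -
    have "measure lebesgue (\<Union>i\<le>N. S (n + i)) \<le> (\<Sum>i\<le>N. measure lebesgue (S (n + i)))"
      using meas by (intro measure_UNION_le) auto
    also have "\<dots> \<le> (\<Sum>i\<le>N. (1/2) ^ (n + i))" using meas by (intro sum_mono) auto
    also have "\<dots> \<le> 2 * (1/2) ^ n" by (rule geo_bound)
    finally show ?thesis .
  qed
  have "T \<in> lmeasurable" "measure lebesgue T \<le> 2 * (1/2) ^ n"
    unfolding T_def using meas fin
    by (intro fmeasurable_countable_Union measure_countable_Union_le; blast)+
  moreover have "(\<Union>k\<in>{n..}. S k) \<subseteq> T"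
  proof
    fix t assume "t \<in> (\<Union>k\<in>{n..}. S k)"
    then obtain k where k: "k \<ge> n" "t \<in> S k" by auto
    then have "t \<in> S (n + (k - n))" by simp
    then show "t \<in> T" unfolding T_def by blast
  qed
  ultimately show ?thesis by blast
qed


theorem ae_if_zero:
  assumes h: "h \<in> F_S1" and M0: "mfun h pi = 0"
  shows "AE x in lebesgue. x \<in> {0..pi} \<longrightarrow> (\<exists>D. (h has_real_derivative D) (at x) \<and> \<bar>D\<bar> = 1)"
proof -
  note hF = F_S1D[OF h]
  note lip = hF(1)
  have hcont: "continuous_on {0..pi} h" using lip by (rule lipschitz_on_continuous_on)
  have "\<forall>n. \<exists>xs. xs \<in> PL pi \<and> psum h xs < (1/2) ^ n"
  proof
    fix n :: nat
    have ne: "psum h ` PL pi \<noteq> {}" using PL_ne[OF lip, of pi] by auto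
    have "Inf (psum h ` PL pi) < (1/2) ^ n" using M0 by (simp add: mfun_def)
    then obtain r where "r \<in> psum h ` PL pi" "r < (1/2) ^ n" using cInf_lessD[OF ne] by blast
    then show "\<exists>xs. xs \<in> PL pi \<and> psum h xs < (1/2) ^ n" by blast
  qed
  then obtain xs where xs: "\<And>n. xs n \<in> PL pi" "\<And>n. psum h (xs n) < (1/2) ^ n"
    by (metis choice)
  have xsp: "sorted (xs n)" "set (xs n) \<subseteq> {0..pi}" "hd (xs n) = 0" "last (xs n) = pi" "xs n \<noteq> []" for n
    using xs(1)[of n] PL_sub[OF xs(1)[of n]] by (auto simp: PL_def)
  define a where "a t = t + h t" for t
  define b where "b t = t - h t" for t
  define ZA where "ZA = (\<Inter>n. \<Union>k\<in>{n..}. Aset h (xs k))"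
  define ZB where "ZB = (\<Inter>n. \<Union>k\<in>{n..}. Bset h (xs k))"
  have cov: "x \<in> ZA \<or> x \<in> ZB" if x: "x \<in> {0<..pi}" for x
  proof (rule ccontr)
    assume "\<not> (x \<in> ZA \<or> x \<in> ZB)"
    then obtain n1 n2 where n1: "\<And>k. k \<ge> n1 \<Longrightarrow> x \<notin> Aset h (xs k)"
      and n2: "\<And>k. k \<ge> n2 \<Longrightarrow> x \<notin> Bset h (xs k)"
      by (auto simp: ZA_def ZB_def)
    define n where "n = max n1 n2"
    have "x \<in> {hd (xs n)..last (xs n)}" using x xsp[of n] by simp
    then have "x \<in> Aset h (xs n) \<union> Bset h (xs n) \<union> {hd (xs n)}"
      using AB_cover[OF xsp(1)[of n] xsp(5)[of n]] by blast
    then show False using n1[of n] n2[of n] x xsp(3)[of n] by (auto simp: n_def)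
  qed
  have small_e: "\<exists>n. 2 * (1/2::real) ^ n \<le> e" if e: "e > 0" for e
  proof -
    obtain n where n: "inverse (real (Suc n)) < e / 2" using reals_Archimedean[of "e/2"] e by auto
    then show ?thesis using pow_half_le[of n] by (intro exI[of _ n]) linarith
  qed
  have negA: "negligible (a ` ZA)"
    unfolding negligible_outer_le
  proof (intro allI impI)
    fix e :: real assume e: "e > 0"
    obtain n where n: "2 * (1/2::real) ^ n \<le> e" using small_e[OF e] by blast
    have meas: "AI h (xs k) \<in> lmeasurable \<and> measure lebesgue (AI h (xs k)) \<le> (1/2) ^ k" for k
      using measA[OF lip xsp(1) xsp(2), of k] xs(2)[of k] by auto
    obtain T where T: "(\<Union>k\<in>{n..}. AI h (xs k)) \<subseteq> T" "T \<in> lmeasurable" "measure lebesgue T \<le> 2 * (1/2) ^ n"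
      using null_union_bound[OF meas e, of n] by blast
    have "a ` ZA \<subseteq> (\<Union>k\<in>{n..}. AI h (xs k))"
    proof
      fix u assume "u \<in> a ` ZA"
      then obtain t where t: "t \<in> ZA" "u = a t" by auto
      then obtain k where k: "k \<ge> n" "t \<in> Aset h (xs k)" by (auto simp: ZA_def)
      then have "u \<in> AI h (xs k)" using imA[OF lip xsp(1) xsp(2), of k] t(2) by (auto simp: a_def)
      then show "u \<in> (\<Union>k\<in>{n..}. AI h (xs k))" using k(1) by auto
    qed
    then show "\<exists>T. a ` ZA \<subseteq> T \<and> T \<in> lmeasurable \<and> measure lebesgue T \<le> e"
      using T n by (intro exI[of _ T]) auto
  qed
  have negB: "negligible (b ` ZB)"
    unfolding negligible_outer_le
  proof (intro allI impI)
    fix e :: real assume e: "e > 0"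
    obtain n where n: "2 * (1/2::real) ^ n \<le> e" using small_e[OF e] by blast
    have meas: "BI h (xs k) \<in> lmeasurable \<and> measure lebesgue (BI h (xs k)) \<le> (1/2) ^ k" for k
      using measB[OF lip xsp(1) xsp(2), of k] xs(2)[of k] by auto
    obtain T where T: "(\<Union>k\<in>{n..}. BI h (xs k)) \<subseteq> T" "T \<in> lmeasurable" "measure lebesgue T \<le> 2 * (1/2) ^ n"
      using null_union_bound[OF meas e, of n] by blast
    have "b ` ZB \<subseteq> (\<Union>k\<in>{n..}. BI h (xs k))"
    proof
      fix u assume "u \<in> b ` ZB"
      then obtain t where t: "t \<in> ZB" "u = b t" by auto
      then obtain k where k: "k \<ge> n" "t \<in> Bset h (xs k)" by (auto simp: ZB_def)
      then have "u \<in> BI h (xs k)" using imB[OF lip xsp(1) xsp(2), of k] t(2) by (auto simp: b_def)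
      then show "u \<in> (\<Union>k\<in>{n..}. BI h (xs k))" using k(1) by auto
    qed
    then show "\<exists>T. b ` ZB \<subseteq> T \<and> T \<in> lmeasurable \<and> measure lebesgue T \<le> e"
      using T n by (intro exI[of _ T]) auto
  qed
  define EA where "EA n = {x \<in> ZA \<inter> {0<..<pi}. \<forall>\<delta>>0. \<exists>y\<in>{0..pi}. y \<noteq> x \<and> \<bar>y - x\<bar> < \<delta> \<and>
       inverse (real (Suc n)) * \<bar>y - x\<bar> \<le> \<bar>a y - a x\<bar>}" for n
  define EB where "EB n = {x \<in> ZB \<inter> {0<..<pi}. \<forall>\<delta>>0. \<exists>y\<in>{0..pi}. y \<noteq> x \<and> \<bar>y - x\<bar> < \<delta> \<and>
       inverse (real (Suc n)) * \<bar>y - x\<bar> \<le> \<bar>b y - b x\<bar>}" for n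
  have acont: "continuous_on {0..pi} a" unfolding a_def[abs_def]
    by (intro continuous_on_add continuous_on_id hcont)
  have bcont: "continuous_on {0..pi} b" unfolding b_def[abs_def]
    by (intro continuous_on_diff continuous_on_id hcont)
  have negEA: "negligible (EA n)" for n
  proof (rule expand_null[of 0 pi a])
    show "\<And>s t. s \<in> {0..pi} \<Longrightarrow> t \<in> {0..pi} \<Longrightarrow> s \<le> t \<Longrightarrow> a s \<le> a t"
      using a_mono[OF lip] by (simp add: a_def)
    show "continuous_on {0..pi} a" by (rule acont)
    show "EA n \<subseteq> {0<..<pi}" by (auto simp: EA_def)
    show "negligible (a ` EA n)" by (rule negligible_subset[OF negA]) (auto simp: EA_def)
    show "0 < inverse (real (Suc n))" by simp
    show "\<And>x \<delta>. x \<in> EA n \<Longrightarrow> 0 < \<delta> \<Longrightarrow> \<exists>y\<in>{0..pi}. y \<noteq> x \<and> \<bar>y - x\<bar> < \<delta> \<and>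
        inverse (real (Suc n)) * \<bar>y - x\<bar> \<le> \<bar>a y - a x\<bar>"
      by (auto simp: EA_def)
  qed
  have negEB: "negligible (EB n)" for n
  proof (rule expand_null[of 0 pi b])
    show "\<And>s t. s \<in> {0..pi} \<Longrightarrow> t \<in> {0..pi} \<Longrightarrow> s \<le> t \<Longrightarrow> b s \<le> b t"
      using b_mono[OF lip] by (simp add: b_def)
    show "continuous_on {0..pi} b" by (rule bcont)
    show "EB n \<subseteq> {0<..<pi}" by (auto simp: EB_def)
    show "negligible (b ` EB n)" by (rule negligible_subset[OF negB]) (auto simp: EB_def)
    show "0 < inverse (real (Suc n))" by simp
    show "\<And>x \<delta>. x \<in> EB n \<Longrightarrow> 0 < \<delta> \<Longrightarrow> \<exists>y\<in>{0..pi}. y \<noteq> x \<and> \<bar>y - x\<bar> < \<delta> \<and>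
        inverse (real (Suc n)) * \<bar>y - x\<bar> \<le> \<bar>b y - b x\<bar>"
      by (auto simp: EB_def)
  qed
  define Nset where "Nset = {0, pi} \<union> (\<Union>n. EA n) \<union> (\<Union>n. EB n)"
  have negN: "negligible Nset" unfolding Nset_def
    using negligible_Union_nat[of EA] negligible_Union_nat[of EB] negEA negEB
    by (simp add: negligible_Un)
  have good: "\<exists>D. (h has_real_derivative D) (at x) \<and> \<bar>D\<bar> = 1" if x: "x \<in> {0..pi}" "x \<notin> Nset" for x
  proof -
    have x0: "x \<in> {0<..<pi}" using x by (auto simp: Nset_def less_le)
    have "x \<in> ZA \<or> x \<in> ZB" using cov[of x] x0 by simp
    then show ?thesis
    proof
      assume xa: "x \<in> ZA"
      have "(h has_real_derivative (-1)) (at x)"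
      proof (rule deriv_from_small[OF x0])
        fix n
        have "x \<notin> EA n" using x(2) by (auto simp: Nset_def)
        then obtain \<delta> where \<delta>: "\<delta> > 0" "\<forall>y\<in>{0..pi}. \<not> (y \<noteq> x \<and> \<bar>y - x\<bar> < \<delta> \<and>
             inverse (real (Suc n)) * \<bar>y - x\<bar> \<le> \<bar>a y - a x\<bar>)"
          using xa x0 by (auto simp: EA_def)
        have "a y - a x = h y - h x - (-1) * (y - x)" for y by (simp add: a_def)
        then show "\<exists>\<delta>>0. \<forall>y\<in>{0..pi}. y \<noteq> x \<and> \<bar>y - x\<bar> < \<delta> \<longrightarrow>
              \<bar>h y - h x - (-1) * (y - x)\<bar> < inverse (real (Suc n)) * \<bar>y - x\<bar>"
          using \<delta> by (intro exI[of _ \<delta>]) (auto simp: not_le)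
      qed
      then show ?thesis by (intro exI[of _ "-1"]) simp
    next
      assume xb: "x \<in> ZB"
      have "(h has_real_derivative 1) (at x)"
      proof (rule deriv_from_small[OF x0])
        fix n
        have "x \<notin> EB n" using x(2) by (auto simp: Nset_def)
        then obtain \<delta> where \<delta>: "\<delta> > 0" "\<forall>y\<in>{0..pi}. \<not> (y \<noteq> x \<and> \<bar>y - x\<bar> < \<delta> \<and>
             inverse (real (Suc n)) * \<bar>y - x\<bar> \<le> \<bar>b y - b x\<bar>)"
          using xb x0 by (auto simp: EB_def)
        have "\<bar>b y - b x\<bar> = \<bar>h y - h x - 1 * (y - x)\<bar>" for y by (simp add: b_def abs_minus_commute)
        then show "\<exists>\<delta>>0. \<forall>y\<in>{0..pi}. y \<noteq> x \<and> \<bar>y - x\<bar> < \<delta> \<longrightarrow>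
              \<bar>h y - h x - 1 * (y - x)\<bar> < inverse (real (Suc n)) * \<bar>y - x\<bar>"
          using \<delta> by (intro exI[of _ \<delta>]) (auto simp: not_le)
      qed
      then show ?thesis by (intro exI[of _ 1]) simp
    qed
  qed
  show ?thesis
  proof (rule AE_I')
    show "Nset \<in> null_sets lebesgue" using negN by (simp add: negligible_iff_null_sets)
    show "{x \<in> space lebesgue. \<not> (x \<in> {0..pi} \<longrightarrow> (\<exists>D. (h has_real_derivative D) (at x) \<and> \<bar>D\<bar> = 1))} \<subseteq> Nset"
      using good by blast
  qed
qed

theorem proposition3p18:
  assumes "h \<in> F_S1"
  shows "extreme_pt F_S1 h \<longleftrightarrow>
    (AE x in lebesgue. x \<in> {0..pi} \<longrightarrow>
       (\<exists>D. (h has_real_derivative D) (at x) \<and> \<bar>D\<bar> = 1))"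
proof
  assume ext: "extreme_pt F_S1 h"
  have lip: "1-lipschitz_on {0..pi} h" using F_S1D[OF assms] by blast
  have "mfun h pi \<ge> 0" using mfun_nonneg[OF lip, of pi] by simp
  moreover have "\<not> mfun h pi > 0" using not_extreme_if_pos[OF assms] ext by blast
  ultimately have "mfun h pi = 0" by simp
  then show "AE x in lebesgue. x \<in> {0..pi} \<longrightarrow> (\<exists>D. (h has_real_derivative D) (at x) \<and> \<bar>D\<bar> = 1)"
    by (rule ae_if_zero[OF assms])
next
  assume "AE x in lebesgue. x \<in> {0..pi} \<longrightarrow> (\<exists>D. (h has_real_derivative D) (at x) \<and> \<bar>D\<bar> = 1)"
  then show "extreme_pt F_S1 h" by (rule extreme_if_ae[OF assms])
qed

end
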